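(* For any $f\in\mathcal{C}(I)$ and integers $m,n\ge0$, $$\operatorname{dist}\big(f,\mathcal{R}^\alpha_{mn}(I)\big)\le\operatorname{dist}\big(f,\mathcal{R}_{mn}(I)\big)+\frac{|\alpha|_\infty}{1-|\alpha|_\infty}\|Id-L\|\Big(\operatorname{dist}\big(f,\mathcal{R}_{mn}(I)\big)+\|f\|_\infty\Big).$$
   Context: $I=[x_0,x_N]$ is a compact interval, $\mathcal{C}(I)$ the real continuous functions with sup norm, $\Delta=\{x_0<x_1<\dots<x_N\}$, $N\ge2$, $I_i=[x_{i-1},x_i]$, $L_i(x)=a_ix+b_i$ the affine map of $I$ onto $I_i$ with $L_i(x_0)=x_{i-1}$, $L_i(x_N)=x_i$; $\alpha\in(-1,1)^N$, $|\alpha|_\infty=\max_i|\alpha_i|$. For $f,b\in\mathcal{C}(I)$ with $b(x_0)=f(x_0)$, $b(x_N)=f(x_N)$, $f^\alpha_{\Delta,b}$ is the unique $g\in\mathcal{C}(I)$ with $g(x)=f(x)+\alpha_i(g-b)(L_i^{-1}(x))$ for $x\in I_i$. $L:\mathcal{C}(I)\to\mathcal{C}(I)$ is bounded linear with $(Lf)(x_0)=f(x_0)$, $(Lf)(x_N)=f(x_N)$, and $\mathcal{F}^\alpha_{\Delta,L}(f)=f^\alpha_{\Delta,Lf}$. $\mathcal{P}_k(I)$ is the space of real algebraic polynomials of degree $\le k$; $\mathcal{R}_{mn}(I)=\{p/q:p\in\mathcal{P}_m(I),q\in\mathcal{P}_n(I),q>0\text{ on }I\}$; $\mathcal{R}^\alpha_{mn}(I)=\mathcal{F}^\alpha_{\Delta,L}(\mathcal{R}_{mn}(I))$;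 $\operatorname{dist}(f,S)=\inf\{\|f-s\|_\infty:s\in S\}$. *)

theory Defs
  imports "HOL-Analysis.Analysis" "HOL-Computational_Algebra.Polynomial"
begin

definition Ival :: "(nat \<Rightarrow> real) \<Rightarrow> nat \<Rightarrow> real set" where
  "Ival xs N = {xs 0 .. xs N}"

definition partition :: "(nat \<Rightarrow> real) \<Rightarrow> nat \<Rightarrow> bool" where
  "partition xs N \<longleftrightarrow> 2 \<le> N \<and> (\<forall>i<N. xs i < xs (Suc i))"

definition supnorm :: "real set \<Rightarrow> (real \<Rightarrow> real) \<Rightarrow> real" where
  "supnorm S g = Sup ((\<lambda>t. \<bar>g t\<bar>) ` S)"

text \<open>C(I): continuous real functions on I (only values on I matter).\<close>
definition CI :: "real set \<Rightarrow> (real \<Rightarrow> real) set" where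
  "CI S = {g. continuous_on S g}"

text \<open>Inverse of the affine map L_i of I onto I_i = [x_{i-1}, x_i].\<close>
definition Linv :: "(nat \<Rightarrow> real) \<Rightarrow> nat \<Rightarrow> nat \<Rightarrow> real \<Rightarrow> real" where
  "Linv xs N i y = xs 0 + (y - xs (i - 1)) * (xs N - xs 0) / (xs i - xs (i - 1))"

definition fractal :: "(nat \<Rightarrow> real) \<Rightarrow> nat \<Rightarrow> (nat \<Rightarrow> real) \<Rightarrow> (real \<Rightarrow> real)
    \<Rightarrow> (real \<Rightarrow> real) \<Rightarrow> (real \<Rightarrow> real)" where
  "fractal xs N \<alpha> f b = (THE g. continuous_on (Ival xs N) g
      \<and> (\<forall>i\<in>{1..N}. \<forall>y\<in>{xs (i - 1) .. xs i}.
            g y = f y + \<alpha> i * (g (Linv xs N i y) - b (Linv xs N i y)))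
      \<and> (\<forall>y. y \<notin> Ival xs N \<longrightarrow> g y = 0))"

definition admissible_op :: "(nat \<Rightarrow> real) \<Rightarrow> nat \<Rightarrow> ((real \<Rightarrow> real) \<Rightarrow> (real \<Rightarrow> real)) \<Rightarrow> bool" where
  "admissible_op xs N L \<longleftrightarrow>
     (let I = Ival xs N in
      (\<forall>f\<in>CI I. L f \<in> CI I)
    \<and> (\<forall>f\<in>CI I. \<forall>g\<in>CI I. (\<forall>t\<in>I. f t = g t) \<longrightarrow> (\<forall>t\<in>I. L f t = L g t))
    \<and> (\<forall>f\<in>CI I. \<forall>g\<in>CI I. \<forall>t\<in>I. L (\<lambda>s. f s + g s) t = L f t + L g t)
    \<and> (\<forall>f\<in>CI I. \<forall>c. \<forall>t\<in>I. L (\<lambda>s. c * f s) t = c * L f t)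
    \<and> (\<exists>M. \<forall>f\<in>CI I. supnorm I (L f) \<le> M * supnorm I f)
    \<and> (\<forall>f\<in>CI I. L f (xs 0) = f (xs 0) \<and> L f (xs N) = f (xs N)))"

definition opnorm_IdL :: "real set \<Rightarrow> ((real \<Rightarrow> real) \<Rightarrow> (real \<Rightarrow> real)) \<Rightarrow> real" where
  "opnorm_IdL I L = Sup {supnorm I (\<lambda>t. g t - L g t) | g. g \<in> CI I \<and> supnorm I g \<le> 1}"

definition fractal_op :: "(nat \<Rightarrow> real) \<Rightarrow> nat \<Rightarrow> (nat \<Rightarrow> real)
    \<Rightarrow> ((real \<Rightarrow> real) \<Rightarrow> (real \<Rightarrow> real)) \<Rightarrow> (real \<Rightarrow> real) \<Rightarrow> (real \<Rightarrow> real)" where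
  "fractal_op xs N \<alpha> L f = fractal xs N \<alpha> f (L f)"

definition Rat_fun :: "real set \<Rightarrow> nat \<Rightarrow> nat \<Rightarrow> (real \<Rightarrow> real) set" where
  "Rat_fun I m n = {(\<lambda>t. poly p t / poly q t) | p q.
       degree p \<le> m \<and> degree q \<le> n \<and> (\<forall>t\<in>I. poly q t > 0)}"

definition dist_set :: "real set \<Rightarrow> (real \<Rightarrow> real) \<Rightarrow> (real \<Rightarrow> real) set \<Rightarrow> real" where
  "dist_set I f S = Inf {supnorm I (\<lambda>t. f t - s t) | s. s \<in> S}"

definition alpha_max :: "nat \<Rightarrow> (nat \<Rightarrow> real) \<Rightarrow> real" where
  "alpha_max N \<alpha> = Max ((\<lambda>i. \<bar>\<alpha> i\<bar>) ` {1..N})"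

end

theory Submission imports Defs begin

lemma sn_bdd: "compact (S::real set) \<Longrightarrow> continuous_on S h \<Longrightarrow> bdd_above ((\<lambda>t. \<bar>(h t::real)\<bar>) ` S)"
proof -
  assume a: "compact S" "continuous_on S h"
  have "compact ((\<lambda>t. \<bar>h t\<bar>) ` S)"
    by (rule compact_continuous_image[OF continuous_on_rabs[OF a(2)] a(1)])
  then show ?thesis by (simp add: bounded_imp_bdd_above compact_imp_bounded)
qed

lemma sn_upper: "compact S \<Longrightarrow> continuous_on S h \<Longrightarrow> t \<in> S \<Longrightarrow> \<bar>h t\<bar> \<le> supnorm S h"
  unfolding supnorm_def by (rule cSUP_upper) (auto intro: sn_bdd)

lemma sn_least: "S \<noteq> {} \<Longrightarrow> (\<And>t. t \<in> S \<Longrightarrow> \<bar>h t\<bar> \<le> c) \<Longrightarrow> supnorm S h \<le> c"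
  unfolding supnorm_def by (rule cSUP_least) auto

lemma sn_nonneg: "compact S \<Longrightarrow> continuous_on S h \<Longrightarrow> S \<noteq> {} \<Longrightarrow> 0 \<le> supnorm S h"
  using sn_upper by (meson abs_ge_zero all_not_in_conv order_trans)

lemma part_mono: "partition xs N \<Longrightarrow> i < j \<Longrightarrow> j \<le> N \<Longrightarrow> xs i < xs j"
proof (induction j)
  case 0 then show ?case by simp
next
  case (Suc j)
  then have "xs j < xs (Suc j)" by (auto simp: partition_def)
  with Suc show ?case by (cases "i = j") auto
qed

lemma part_le: "partition xs N \<Longrightarrow> i \<le> j \<Longrightarrow> j \<le> N \<Longrightarrow> xs i \<le> xs j"
  using part_mono[of xs N i j] by (cases "i = j") auto

lemma part_inj: "partition xs N \<Longrightarrow> i \<le> N \<Longrightarrow> j \<le> N \<Longrightarrow> xs i = xs j \<Longrightarrow> i = j"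
  using part_mono[of xs N i j] part_mono[of xs N j i] by (cases i j rule: linorder_cases) auto

lemma part_N: "partition xs N \<Longrightarrow> xs 0 < xs N"
  using part_mono[of xs N 0 N] by (auto simp: partition_def)

lemma Linv_left: "Linv xs N i (xs (i - 1)) = xs 0"
  by (simp add: Linv_def)

lemma Linv_right: "partition xs N \<Longrightarrow> i \<in> {1..N} \<Longrightarrow> Linv xs N i (xs i) = xs N"
proof -
  assume p: "partition xs N" and i: "i \<in> {1..N}"
  then have "xs (i - 1) < xs i" using part_mono[of xs N "i - 1" i] by auto
  then show ?thesis by (simp add: Linv_def)
qed

lemma Linv_in: "partition xs N \<Longrightarrow> i \<in> {1..N} \<Longrightarrow> y \<in> {xs (i - 1) .. xs i} \<Longrightarrow> Linv xs N i y \<in> Ival xs N"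
proof -
  assume p: "partition xs N" and i: "i \<in> {1..N}" and y: "y \<in> {xs (i - 1) .. xs i}"
  define a where "a = xs (i - 1)"
  define c where "c = xs i"
  define D where "D = xs N - xs 0"
  have ac: "a < c" using part_mono[of xs N "i - 1" i] p i by (auto simp: a_def c_def)
  have D: "D > 0" using part_N[OF p] by (simp add: D_def)
  have y': "a \<le> y" "y \<le> c" using y by (auto simp: a_def c_def)
  have "0 \<le> (y - a) * D / (c - a)" using ac D y' by simp
  moreover have "(y - a) * D / (c - a) \<le> D"
  proof -
    have "(y - a) * D \<le> (c - a) * D" using D y' by (intro mult_right_mono) auto
    then show ?thesis using ac by (simp add: divide_le_eq mult.commute)
  qed
  ultimately show ?thesis
    by (simp add: Linv_def Ival_def a_def c_def D_def)
qed

lemma Linv_cont: "continuous_on S (Linv xs N i)"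
proof -
  have "Linv xs N i = (\<lambda>y. xs 0 + (y - xs (i - 1)) * ((xs N - xs 0) / (xs i - xs (i - 1))))"
    by (auto simp: Linv_def)
  moreover have "continuous_on S (\<lambda>y. xs 0 + (y - xs (i - 1)) * ((xs N - xs 0) / (xs i - xs (i - 1))))"
    by (intro continuous_intros)
  ultimately show ?thesis by simp
qed

definition idx :: "(nat \<Rightarrow> real) \<Rightarrow> nat \<Rightarrow> real \<Rightarrow> nat" where
  "idx xs N y = (LEAST i. 1 \<le> i \<and> y \<le> xs i)"

lemma idx_props:
  assumes p: "partition xs N" and y: "y \<in> Ival xs N"
  shows "idx xs N y \<in> {1..N}" "y \<in> {xs (idx xs N y - 1) .. xs (idx xs N y)}"
proof -
  let ?P = "\<lambda>i. 1 \<le> i \<and> y \<le> xs i"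
  have PN: "?P N" using p y by (auto simp: partition_def Ival_def)
  have P: "?P (idx xs N y)" unfolding idx_def by (rule LeastI[of ?P, OF PN])
  have le: "idx xs N y \<le> N" unfolding idx_def by (rule Least_le[of ?P, OF PN])
  show "idx xs N y \<in> {1..N}" using P le by auto
  have "xs (idx xs N y - 1) \<le> y"
  proof (cases "idx xs N y = 1")
    case True then show ?thesis using y by (simp add: Ival_def)
  next
    case False
    then have lt: "idx xs N y - 1 < idx xs N y" and "1 \<le> idx xs N y - 1" using P by auto
    have "\<not> ?P (idx xs N y - 1)" using lt unfolding idx_def by (rule not_less_Least)
    with \<open>1 \<le> idx xs N y - 1\<close> show ?thesis by auto
  qed
  then show "y \<in> {xs (idx xs N y - 1) .. xs (idx xs N y)}" using P by auto
qed

lemma idx_le: "1 \<le> i \<Longrightarrow> y \<le> xs i \<Longrightarrow> idx xs N y \<le> i"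
  unfolding idx_def by (rule Least_le) auto


definition Tm :: "(nat \<Rightarrow> real) \<Rightarrow> nat \<Rightarrow> (nat \<Rightarrow> real) \<Rightarrow> (real \<Rightarrow> real) \<Rightarrow> (real \<Rightarrow> real)
   \<Rightarrow> (real \<Rightarrow> real) \<Rightarrow> real \<Rightarrow> real" where
  "Tm xs N \<alpha> f b h y = f y + \<alpha> (idx xs N y) * (h (Linv xs N (idx xs N y) y) - b (Linv xs N (idx xs N y) y))"

context
  fixes xs :: "nat \<Rightarrow> real" and N :: nat and \<alpha> :: "nat \<Rightarrow> real" and f b :: "real \<Rightarrow> real"
  assumes p: "partition xs N" and al: "\<forall>i\<in>{1..N}. \<bar>\<alpha> i\<bar> < 1"
    and fc: "continuous_on (Ival xs N) f" and bc: "continuous_on (Ival xs N) b"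
    and b0: "b (xs 0) = f (xs 0)" and bN: "b (xs N) = f (xs N)"
begin

lemma a_props: "\<forall>i\<in>{1..N}. \<bar>\<alpha> i\<bar> \<le> alpha_max N \<alpha>" "alpha_max N \<alpha> < 1" "0 \<le> alpha_max N \<alpha>"
proof -
  have ne: "(\<lambda>i. \<bar>\<alpha> i\<bar>) ` {1..N} \<noteq> {}" using p by (auto simp: partition_def)
  show "\<forall>i\<in>{1..N}. \<bar>\<alpha> i\<bar> \<le> alpha_max N \<alpha>" unfolding alpha_max_def by (auto intro: Max_ge)
  have "alpha_max N \<alpha> \<in> (\<lambda>i. \<bar>\<alpha> i\<bar>) ` {1..N}" unfolding alpha_max_def by (rule Max_in) (use ne in auto)
  then show "alpha_max N \<alpha> < 1" "0 \<le> alpha_max N \<alpha>" using al by auto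
qed

lemma I_ne: "Ival xs N \<noteq> {}" and I_cp: "compact (Ival xs N)"
  using part_N[OF p] by (auto simp: Ival_def)

lemma piece_sub: "i \<in> {1..N} \<Longrightarrow> {xs (i - 1) .. xs i} \<subseteq> Ival xs N"
  using part_le[OF p, of 0 "i - 1"] part_le[OF p, of i N] by (auto simp: Ival_def)

lemma Tm_piece:
  assumes i: "i \<in> {1..N}" and y: "y \<in> {xs (i - 1) .. xs i}"
    and h0: "h (xs 0) = b (xs 0)" and hN: "h (xs N) = b (xs N)"
  shows "Tm xs N \<alpha> f b h y = f y + \<alpha> i * (h (Linv xs N i y) - b (Linv xs N i y))"
proof -
  have yI: "y \<in> Ival xs N" using piece_sub[OF i] y by auto
  define j where "j = idx xs N y"
  have j: "j \<in> {1..N}" "y \<in> {xs (j - 1) .. xs j}" using idx_props[OF p yI] by (auto simp: j_def)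
  have ji: "j \<le> i" unfolding j_def using i y by (intro idx_le) auto
  show ?thesis
  proof (cases "j = i")
    case True then show ?thesis by (simp add: Tm_def j_def)
  next
    case False
    then have "j \<le> i - 1" using ji by auto
    then have "xs j \<le> xs (i - 1)" using part_le[OF p, of j "i - 1"] i by auto
    then have e: "xs j = xs (i - 1)" "y = xs j" using j y by auto
    then have "j = i - 1" using part_inj[OF p, of j "i - 1"] i j by auto
    have "Linv xs N j y = xs N" using e Linv_right[OF p j(1)] by simp
    moreover have "Linv xs N i y = xs 0" using e Linv_left[of xs N i] by simp
    ultimately show ?thesis using h0 hN by (simp add: Tm_def j_def[symmetric])
  qed
qed

lemma I_union: "Ival xs N = (\<Union>i\<in>{1..N}. {xs (i - 1) .. xs i})"
proof
  show "Ival xs N \<subseteq> (\<Union>i\<in>{1..N}. {xs (i - 1) .. xs i})"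
    using idx_props[OF p] by blast
  show "(\<Union>i\<in>{1..N}. {xs (i - 1) .. xs i}) \<subseteq> Ival xs N" using piece_sub by blast
qed

lemma piece_cont:
  assumes i: "i \<in> {1..N}" and hc: "continuous_on (Ival xs N) h"
  shows "continuous_on {xs (i - 1) .. xs i} (\<lambda>y. f y + \<alpha> i * (h (Linv xs N i y) - b (Linv xs N i y)))"
proof -
  have im: "Linv xs N i ` {xs (i - 1) .. xs i} \<subseteq> Ival xs N" using Linv_in[OF p i] by auto
  have c1: "continuous_on {xs (i - 1) .. xs i} (\<lambda>y. h (Linv xs N i y))"
    by (rule continuous_on_compose2[OF hc Linv_cont im])
  have c2: "continuous_on {xs (i - 1) .. xs i} (\<lambda>y. b (Linv xs N i y))"
    by (rule continuous_on_compose2[OF bc Linv_cont im])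
  have c3: "continuous_on {xs (i - 1) .. xs i} f" using continuous_on_subset[OF fc piece_sub[OF i]] .
  show ?thesis by (intro continuous_intros c1 c2 c3)
qed

lemma Tm_cont:
  assumes hc: "continuous_on (Ival xs N) h" and h0: "h (xs 0) = b (xs 0)" and hN: "h (xs N) = b (xs N)"
  shows "continuous_on (Ival xs N) (Tm xs N \<alpha> f b h)"
proof -
  have "continuous_on (\<Union>i\<in>{1..N}. {xs (i - 1) .. xs i}) (Tm xs N \<alpha> f b h)"
  proof (rule continuous_on_closed_Union)
    fix i assume i: "i \<in> {1..N}"
    show "continuous_on {xs (i - 1) .. xs i} (Tm xs N \<alpha> f b h)"
      using piece_cont[OF i hc] by (rule continuous_on_eq) (use Tm_piece[OF i _ h0 hN] in auto)
  qed auto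
  then show ?thesis using I_union by simp
qed

lemma Tm_ends:
  assumes h0: "h (xs 0) = b (xs 0)" and hN: "h (xs N) = b (xs N)"
  shows "Tm xs N \<alpha> f b h (xs 0) = b (xs 0)" "Tm xs N \<alpha> f b h (xs N) = b (xs N)"
proof -
  have N1: "1 \<in> {1..N}" "N \<in> {1..N}" using p by (auto simp: partition_def)
  have x01: "xs 0 \<in> {xs (1 - 1) .. xs 1}" using part_le[OF p, of 0 1] N1 by auto
  have L1: "Linv xs N 1 (xs 0) = xs 0" using Linv_left[of xs N 1] by simp
  show "Tm xs N \<alpha> f b h (xs 0) = b (xs 0)"
    using Tm_piece[OF N1(1) x01 h0 hN] L1 h0 b0 by simp
  have xN: "xs N \<in> {xs (N - 1) .. xs N}" using part_le[OF p, of "N - 1" N] by auto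
  show "Tm xs N \<alpha> f b h (xs N) = b (xs N)"
    using Tm_piece[OF N1(2) xN h0 hN] Linv_right[OF p N1(2)] hN bN by simp
qed

lemma Tm_diff:
  assumes y: "y \<in> Ival xs N" and E: "\<forall>z\<in>Ival xs N. \<bar>h1 z - h2 z\<bar> \<le> E"
  shows "\<bar>Tm xs N \<alpha> f b h1 y - Tm xs N \<alpha> f b h2 y\<bar> \<le> alpha_max N \<alpha> * E"
proof -
  define j where "j = idx xs N y"
  define z where "z = Linv xs N j y"
  have j: "j \<in> {1..N}" "y \<in> {xs (j - 1) .. xs j}" using idx_props[OF p y] by (auto simp: j_def)
  have z: "z \<in> Ival xs N" using Linv_in[OF p j] by (simp add: z_def)
  have "Tm xs N \<alpha> f b h1 y - Tm xs N \<alpha> f b h2 y = \<alpha> j * (h1 z - h2 z)"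
    by (simp add: Tm_def j_def[symmetric] z_def[symmetric] algebra_simps)
  then have "\<bar>Tm xs N \<alpha> f b h1 y - Tm xs N \<alpha> f b h2 y\<bar> = \<bar>\<alpha> j\<bar> * \<bar>h1 z - h2 z\<bar>" by (simp add: abs_mult)
  also have "\<dots> \<le> alpha_max N \<alpha> * E"
    using a_props(1) j(1) E z by (intro mult_mono) auto
  finally show ?thesis .
qed


definition FP :: "(real \<Rightarrow> real) \<Rightarrow> bool" where
  "FP g \<longleftrightarrow> continuous_on (Ival xs N) g
      \<and> (\<forall>i\<in>{1..N}. \<forall>y\<in>{xs (i - 1) .. xs i}.
            g y = f y + \<alpha> i * (g (Linv xs N i y) - b (Linv xs N i y)))
      \<and> (\<forall>y. y \<notin> Ival xs N \<longrightarrow> g y = 0)"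

lemma FP_diff:
  assumes g: "FP g" and y: "y \<in> Ival xs N"
  obtains z where "z \<in> Ival xs N" "\<bar>g y - f y\<bar> = \<bar>\<alpha> (idx xs N y)\<bar> * \<bar>g z - b z\<bar>" "\<bar>\<alpha> (idx xs N y)\<bar> \<le> alpha_max N \<alpha>"
proof -
  define j where "j = idx xs N y"
  define z where "z = Linv xs N j y"
  have j: "j \<in> {1..N}" "y \<in> {xs (j - 1) .. xs j}" using idx_props[OF p y] by (auto simp: j_def)
  have z: "z \<in> Ival xs N" using Linv_in[OF p j] by (simp add: z_def)
  have "g y = f y + \<alpha> j * (g z - b z)" using g j unfolding FP_def z_def by blast
  then have "\<bar>g y - f y\<bar> = \<bar>\<alpha> j\<bar> * \<bar>g z - b z\<bar>" by (simp add: abs_mult)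
  then show ?thesis using that z a_props(1) j(1) by (auto simp: j_def)
qed

lemma FP_unique:
  assumes g1: "FP g1" and g2: "FP g2"
  shows "g1 = g2"
proof -
  let ?E = "supnorm (Ival xs N) (\<lambda>t. g1 t - g2 t)"
  have c: "continuous_on (Ival xs N) (\<lambda>t. g1 t - g2 t)"
    using g1 g2 unfolding FP_def by (auto intro: continuous_intros)
  have up: "\<And>t. t \<in> Ival xs N \<Longrightarrow> \<bar>g1 t - g2 t\<bar> \<le> ?E" using sn_upper[OF I_cp c] by simp
  have "\<bar>g1 y - g2 y\<bar> \<le> alpha_max N \<alpha> * ?E" if y: "y \<in> Ival xs N" for y
  proof -
    define j where "j = idx xs N y"
    define z where "z = Linv xs N j y"
    have j: "j \<in> {1..N}" "y \<in> {xs (j - 1) .. xs j}" using idx_props[OF p y] by (auto simp: j_def)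
    have z: "z \<in> Ival xs N" using Linv_in[OF p j] by (simp add: z_def)
    have "g1 y = f y + \<alpha> j * (g1 z - b z)" using g1 j unfolding FP_def z_def by blast
    moreover have "g2 y = f y + \<alpha> j * (g2 z - b z)" using g2 j unfolding FP_def z_def by blast
    ultimately have "\<bar>g1 y - g2 y\<bar> = \<bar>\<alpha> j\<bar> * \<bar>g1 z - g2 z\<bar>" by (simp add: abs_mult[symmetric] algebra_simps)
    also have "\<dots> \<le> alpha_max N \<alpha> * ?E"
      using a_props(1) j(1) up[OF z] by (intro mult_mono) auto
    finally show ?thesis .
  qed
  then have "?E \<le> alpha_max N \<alpha> * ?E" by (intro sn_least[OF I_ne]) auto
  moreover have "0 \<le> ?E" by (rule sn_nonneg[OF I_cp c I_ne])
  ultimately have "?E \<le> 0" using a_props(2) by (smt (verit) mult_less_cancel_right2)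
  then have "\<And>t. t \<in> Ival xs N \<Longrightarrow> g1 t = g2 t" using up by fastforce
  moreover have "\<And>t. t \<notin> Ival xs N \<Longrightarrow> g1 t = g2 t" using g1 g2 unfolding FP_def by auto
  ultimately show ?thesis by (metis ext)
qed

lemma FP_estimate:
  assumes g: "FP g" and y: "y \<in> Ival xs N"
  shows "\<bar>g y - f y\<bar> \<le> alpha_max N \<alpha> / (1 - alpha_max N \<alpha>) * supnorm (Ival xs N) (\<lambda>t. f t - b t)"
proof -
  let ?a = "alpha_max N \<alpha>"
  let ?E = "supnorm (Ival xs N) (\<lambda>t. g t - f t)"
  let ?B = "supnorm (Ival xs N) (\<lambda>t. f t - b t)"
  have c: "continuous_on (Ival xs N) (\<lambda>t. g t - f t)"
    using g fc unfolding FP_def by (auto intro: continuous_intros)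
  have cB: "continuous_on (Ival xs N) (\<lambda>t. f t - b t)"
    using bc fc by (auto intro: continuous_intros)
  have up: "\<And>t. t \<in> Ival xs N \<Longrightarrow> \<bar>g t - f t\<bar> \<le> ?E" using sn_upper[OF I_cp c] by simp
  have upB: "\<And>t. t \<in> Ival xs N \<Longrightarrow> \<bar>f t - b t\<bar> \<le> ?B" using sn_upper[OF I_cp cB] by simp
  have "\<bar>g t - f t\<bar> \<le> ?a * (?E + ?B)" if t: "t \<in> Ival xs N" for t
  proof -
    obtain z where z: "z \<in> Ival xs N" "\<bar>g t - f t\<bar> = \<bar>\<alpha> (idx xs N t)\<bar> * \<bar>g z - b z\<bar>"
      "\<bar>\<alpha> (idx xs N t)\<bar> \<le> ?a" using FP_diff[OF g t] by blast
    have "\<bar>g z - b z\<bar> \<le> ?E + ?B" using up[OF z(1)] upB[OF z(1)] by linarith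
    then show ?thesis using z(2,3) by (simp add: mult_mono)
  qed
  then have "?E \<le> ?a * (?E + ?B)" by (intro sn_least[OF I_ne]) auto
  then have "?E * (1 - ?a) \<le> ?a * ?B" by (simp add: algebra_simps)
  then have "?E \<le> ?a / (1 - ?a) * ?B" using a_props(2) by (simp add: field_simps)
  then show ?thesis using up[OF y] by linarith
qed


lemma FP_exists: "\<exists>g. FP g"
proof -
  let ?a = "alpha_max N \<alpha>"
  let ?T = "Tm xs N \<alpha> f b"
  define H where "H = (\<lambda>k. (?T ^^ k) f)"
  have HS: "H (Suc k) = ?T (H k)" for k by (simp add: H_def)
  have inv: "continuous_on (Ival xs N) (H k) \<and> H k (xs 0) = b (xs 0) \<and> H k (xs N) = b (xs N)" for k
  proof (induction k)
    case 0 then show ?case using fc b0 bN by (simp add: H_def)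
  next
    case (Suc k) then show ?case using Tm_cont Tm_ends by (simp add: HS)
  qed
  define B where "B = supnorm (Ival xs N) (\<lambda>t. f t - b t)"
  have cB: "continuous_on (Ival xs N) (\<lambda>t. f t - b t)"
    using bc fc by (auto intro: continuous_intros)
  have B0: "0 \<le> B" unfolding B_def by (rule sn_nonneg[OF I_cp cB I_ne])
  have upB: "\<And>t. t \<in> Ival xs N \<Longrightarrow> \<bar>f t - b t\<bar> \<le> B" using sn_upper[OF I_cp cB] by (simp add: B_def)
  have step: "\<forall>y\<in>Ival xs N. \<bar>H (Suc k) y - H k y\<bar> \<le> ?a ^ k * B" for k
  proof (induction k)
    case 0
    show ?case
    proof
      fix y assume y: "y \<in> Ival xs N"
      define j where "j = idx xs N y"
      define z where "z = Linv xs N j y"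
      have j: "j \<in> {1..N}" "y \<in> {xs (j - 1) .. xs j}" using idx_props[OF p y] by (auto simp: j_def)
      have z: "z \<in> Ival xs N" using Linv_in[OF p j] by (simp add: z_def)
      have a1: "\<bar>\<alpha> j\<bar> \<le> 1" using al j(1) by (meson less_imp_le)
      have "H (Suc 0) y - H 0 y = \<alpha> j * (f z - b z)"
        by (simp add: H_def Tm_def j_def[symmetric] z_def[symmetric])
      then have "\<bar>H (Suc 0) y - H 0 y\<bar> = \<bar>\<alpha> j\<bar> * \<bar>f z - b z\<bar>" by (simp add: abs_mult)
      also have "\<dots> \<le> 1 * B" using a1 upB[OF z] by (intro mult_mono) auto
      finally show "\<bar>H (Suc 0) y - H 0 y\<bar> \<le> ?a ^ 0 * B" by simp
    qed
  next
    case (Suc k)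
    show ?case
    proof
      fix y assume y: "y \<in> Ival xs N"
      have "\<bar>?T (H (Suc k)) y - ?T (H k) y\<bar> \<le> ?a * (?a ^ k * B)"
        by (rule Tm_diff[OF y Suc])
      then show "\<bar>H (Suc (Suc k)) y - H (Suc k) y\<bar> \<le> ?a ^ Suc k * B" by (simp add: HS)
    qed
  qed
  have geo: "\<bar>H (k + d) y - H k y\<bar> \<le> (\<Sum>i<d. ?a ^ (k + i)) * B" if y: "y \<in> Ival xs N" for k d y
  proof (induction d)
    case 0 then show ?case by simp
  next
    case (Suc d)
    have "\<bar>H (k + Suc d) y - H k y\<bar> \<le> \<bar>H (Suc (k + d)) y - H (k + d) y\<bar> + \<bar>H (k + d) y - H k y\<bar>"
      by simp
    also have "\<dots> \<le> ?a ^ (k + d) * B + (\<Sum>i<d. ?a ^ (k + i)) * B"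
      using step y Suc by (intro add_mono) auto
    finally show ?case by (simp add: algebra_simps)
  qed
  have sumb: "(\<Sum>i<d. ?a ^ (k + i)) \<le> ?a ^ k / (1 - ?a)" for k d
  proof -
    have s: "summable (\<lambda>i. ?a ^ i)" using a_props by (intro summable_geometric) auto
    have "(\<Sum>i<d. ?a ^ i) \<le> (\<Sum>i. ?a ^ i)"
      using a_props by (intro sum_le_suminf[OF s]) auto
    also have "\<dots> = 1 / (1 - ?a)" using a_props by (intro suminf_geometric) auto
    finally have "(\<Sum>i<d. ?a ^ i) \<le> 1 / (1 - ?a)" .
    then have "?a ^ k * (\<Sum>i<d. ?a ^ i) \<le> ?a ^ k * (1 / (1 - ?a))"
      using a_props by (intro mult_left_mono) auto
    then show ?thesis by (simp add: sum_distrib_left power_add)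
  qed
  define C where "C = B / (1 - ?a)"
  have bnd: "\<bar>H (k + d) y - H k y\<bar> \<le> ?a ^ k * C" if y: "y \<in> Ival xs N" for k d y
  proof -
    have "\<bar>H (k + d) y - H k y\<bar> \<le> (\<Sum>i<d. ?a ^ (k + i)) * B" by (rule geo[OF y])
    also have "\<dots> \<le> ?a ^ k / (1 - ?a) * B" using sumb B0 by (intro mult_right_mono) auto
    finally show ?thesis by (simp add: C_def)
  qed
  have lim0: "(\<lambda>k. ?a ^ k * C) \<longlonglongrightarrow> 0"
    using a_props by (intro tendsto_mult_left_zero LIMSEQ_power_zero) auto
  have "uniformly_Cauchy_on (Ival xs N) H"
    unfolding uniformly_Cauchy_on_def
  proof (intro allI impI)
    fix e :: real assume e: "e > 0"
    have "eventually (\<lambda>k. ?a ^ k * C < e) sequentially"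
      using order_tendstoD(2)[OF lim0 e] .
    then obtain M where M: "\<And>k. k \<ge> M \<Longrightarrow> ?a ^ k * C < e" by (auto simp: eventually_sequentially)
    have "dist (H m y) (H n y) < e" if y: "y \<in> Ival xs N" and m: "m \<ge> M" and n: "n \<ge> M" for y m n
    proof (cases "m \<le> n")
      case True
      have "\<bar>H (m + (n - m)) y - H m y\<bar> \<le> ?a ^ m * C" by (rule bnd[OF y])
      then show ?thesis using True M[OF m] by (simp add: dist_real_def abs_minus_commute)
    next
      case False
      have "\<bar>H (n + (m - n)) y - H n y\<bar> \<le> ?a ^ n * C" by (rule bnd[OF y])
      then show ?thesis using False M[OF n] by (simp add: dist_real_def)
    qed
    then show "\<exists>M. \<forall>x\<in>Ival xs N. \<forall>m\<ge>M. \<forall>n\<ge>M. dist (H m x) (H n x) < e" by blast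
  qed
  then have "uniformly_convergent_on (Ival xs N) H" by (rule Cauchy_uniformly_convergent)
  then obtain g0 where ul: "uniform_limit (Ival xs N) H g0 sequentially"
    by (auto simp: uniformly_convergent_on_def)
  have g0c: "continuous_on (Ival xs N) g0"
    by (rule uniform_limit_theorem[OF _ ul]) (use inv in auto)
  have pt: "(\<lambda>k. H k y) \<longlonglongrightarrow> g0 y" if "y \<in> Ival xs N" for y
    by (rule tendsto_uniform_limitI[OF ul that])
  have x0I: "xs 0 \<in> Ival xs N" and xNI: "xs N \<in> Ival xs N" using part_N[OF p] by (auto simp: Ival_def)
  have g00: "g0 (xs 0) = b (xs 0)"
  proof -
    have "(\<lambda>k. H k (xs 0)) \<longlonglongrightarrow> b (xs 0)" using inv by simp
    then show ?thesis using pt[OF x0I] LIMSEQ_unique by blast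
  qed
  have g0N: "g0 (xs N) = b (xs N)"
  proof -
    have "(\<lambda>k. H k (xs N)) \<longlonglongrightarrow> b (xs N)" using inv by simp
    then show ?thesis using pt[OF xNI] LIMSEQ_unique by blast
  qed
  have fix0: "g0 y = ?T g0 y" if y: "y \<in> Ival xs N" for y
  proof -
    define j where "j = idx xs N y"
    define z where "z = Linv xs N j y"
    have j: "j \<in> {1..N}" "y \<in> {xs (j - 1) .. xs j}" using idx_props[OF p y] by (auto simp: j_def)
    have z: "z \<in> Ival xs N" using Linv_in[OF p j] by (simp add: z_def)
    have e: "H (Suc k) y = f y + \<alpha> j * (H k z - b z)" for k
      by (simp add: HS Tm_def j_def[symmetric] z_def[symmetric])
    have "(\<lambda>k. f y + \<alpha> j * (H k z - b z)) \<longlonglongrightarrow> f y + \<alpha> j * (g0 z - b z)"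
      by (intro tendsto_intros pt[OF z])
    then have "(\<lambda>k. H (Suc k) y) \<longlonglongrightarrow> ?T g0 y"
      by (simp add: e Tm_def j_def[symmetric] z_def[symmetric])
    moreover have "(\<lambda>k. H (Suc k) y) \<longlonglongrightarrow> g0 y" using pt[OF y] by (rule LIMSEQ_Suc)
    ultimately show ?thesis using LIMSEQ_unique by blast
  qed
  define g where "g = (\<lambda>y. if y \<in> Ival xs N then g0 y else 0)"
  have "FP g"
    unfolding FP_def
  proof (intro conjI ballI allI impI)
    show "continuous_on (Ival xs N) g" using g0c by (rule continuous_on_eq) (simp add: g_def)
  next
    fix i y assume i: "i \<in> {1..N}" and y: "y \<in> {xs (i - 1) .. xs i}"
    have yI: "y \<in> Ival xs N" using piece_sub[OF i] y by auto
    have zI: "Linv xs N i y \<in> Ival xs N" using Linv_in[OF p i y] .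
    have "g0 y = f y + \<alpha> i * (g0 (Linv xs N i y) - b (Linv xs N i y))"
      using fix0[OF yI] Tm_piece[OF i y g00 g0N] by simp
    then show "g y = f y + \<alpha> i * (g (Linv xs N i y) - b (Linv xs N i y))"
      using yI zI by (simp add: g_def)
  next
    fix y assume "y \<notin> Ival xs N" then show "g y = 0" by (simp add: g_def)
  qed
  then show ?thesis by blast
qed

lemma fractal_FP: "FP (fractal xs N \<alpha> f b)"
proof -
  have "\<exists>!g. FP g" using FP_exists FP_unique by blast
  then have "FP (THE g. FP g)" by (rule theI')
  moreover have "fractal xs N \<alpha> f b = (THE g. FP g)" unfolding fractal_def FP_def ..
  ultimately show ?thesis by simp
qed

end



lemma rat_cont: "r \<in> Rat_fun S m n \<Longrightarrow> continuous_on S r"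
  unfolding Rat_fun_def by (auto intro!: continuous_intros simp: less_imp_neq[symmetric])

lemma rat_ne: "(\<lambda>t. poly 0 t / poly 1 t) \<in> Rat_fun S m n"
proof -
  have "\<exists>p q. (\<lambda>t::real. poly 0 t / poly 1 t) = (\<lambda>t. poly p t / poly q t) \<and> degree p \<le> m \<and> degree q \<le> n \<and> (\<forall>t\<in>S. poly q t > 0)"
    by (rule exI[of _ 0], rule exI[of _ 1]) simp
  then show ?thesis unfolding Rat_fun_def by blast
qed

theorem mainTheorem8:
  fixes xs :: "nat \<Rightarrow> real" and N :: nat and \<alpha> :: "nat \<Rightarrow> real"
    and L :: "(real \<Rightarrow> real) \<Rightarrow> (real \<Rightarrow> real)" and f :: "real \<Rightarrow> real" and m n :: nat
  assumes "partition xs N"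
    and "\<forall>i\<in>{1..N}. \<bar>\<alpha> i\<bar> < 1"
    and "admissible_op xs N L"
    and "f \<in> CI (Ival xs N)"
  shows "dist_set (Ival xs N) f (fractal_op xs N \<alpha> L ` Rat_fun (Ival xs N) m n)
     \<le> dist_set (Ival xs N) f (Rat_fun (Ival xs N) m n)
       + alpha_max N \<alpha> / (1 - alpha_max N \<alpha>) * opnorm_IdL (Ival xs N) L
         * (dist_set (Ival xs N) f (Rat_fun (Ival xs N) m n) + supnorm (Ival xs N) f)"
proof -
  note p = assms(1) and al = assms(2)
  define I where "I = Ival xs N"
  have Icp: "compact I" and Ine: "I \<noteq> {}" using part_N[OF p] by (auto simp: I_def Ival_def)
  have fc: "continuous_on I f" using assms(4) by (simp add: CI_def I_def)
  have A: "\<forall>f\<in>CI I. L f \<in> CI I"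
    "\<forall>f\<in>CI I. \<forall>g\<in>CI I. (\<forall>t\<in>I. f t = g t) \<longrightarrow> (\<forall>t\<in>I. L f t = L g t)"
    "\<forall>f\<in>CI I. \<forall>c. \<forall>t\<in>I. L (\<lambda>s. c * f s) t = c * L f t"
    "\<exists>M. \<forall>f\<in>CI I. supnorm I (L f) \<le> M * supnorm I f"
    "\<forall>f\<in>CI I. L f (xs 0) = f (xs 0) \<and> L f (xs N) = f (xs N)"
    using assms(3) unfolding admissible_op_def Let_def I_def by blast+
  obtain M where M: "\<forall>f\<in>CI I. supnorm I (L f) \<le> M * supnorm I f" using A(4) by blast
  define a where "a = alpha_max N \<alpha>"
  have fcI: "continuous_on (Ival xs N) f" using fc by (simp add: I_def)
  have a: "0 \<le> a" "a < 1" using a_props[OF p al fcI fcI refl refl] by (auto simp: a_def)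
  define c where "c = a / (1 - a)"
  have c0: "0 \<le> c" using a by (simp add: c_def)
  define K where "K = opnorm_IdL I L"
  define Q where "Q = {supnorm I (\<lambda>t. g t - L g t) | g. g \<in> CI I \<and> supnorm I g \<le> 1}"
  have QI: "\<And>g. g \<in> CI I \<Longrightarrow> supnorm I g \<le> 1 \<Longrightarrow> supnorm I (\<lambda>t. g t - L g t) \<in> Q"
    unfolding Q_def by blast
  have KQ: "K = Sup Q" by (simp add: K_def Q_def opnorm_IdL_def)
  have Qbdd: "bdd_above Q"
  proof (rule bdd_aboveI)
    fix x assume "x \<in> Q"
    then obtain g where x: "x = supnorm I (\<lambda>t. g t - L g t)" and g: "g \<in> CI I" "supnorm I g \<le> 1"
      unfolding Q_def by blast
    have gc: "continuous_on I g" using g by (simp add: CI_def)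
    have Lgc: "continuous_on I (L g)" using A(1) g by (simp add: CI_def)
    have "supnorm I (L g) \<le> M * supnorm I g" using M g by blast
    also have "\<dots> \<le> \<bar>M\<bar>"
    proof -
      have "0 \<le> supnorm I g" by (rule sn_nonneg[OF Icp gc Ine])
      then have "M * supnorm I g \<le> \<bar>M\<bar> * supnorm I g" by (intro mult_right_mono) auto
      also have "\<dots> \<le> \<bar>M\<bar> * 1" using g by (intro mult_left_mono) auto
      finally show ?thesis by simp
    qed
    finally have LM: "supnorm I (L g) \<le> \<bar>M\<bar>" .
    have "x \<le> 1 + \<bar>M\<bar>" unfolding x
    proof (rule sn_least[OF Ine])
      fix t assume t: "t \<in> I"
      have "\<bar>g t - L g t\<bar> \<le> \<bar>g t\<bar> + \<bar>L g t\<bar>" by simp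
      also have "\<dots> \<le> supnorm I g + supnorm I (L g)"
        using sn_upper[OF Icp gc t] sn_upper[OF Icp Lgc t] by simp
      finally show "\<bar>g t - L g t\<bar> \<le> 1 + \<bar>M\<bar>" using g LM by simp
    qed
    then show "x \<le> 1 + \<bar>M\<bar>" .
  qed
  have zCI: "(\<lambda>s. 0::real) \<in> CI I" by (simp add: CI_def)
  have L0: "L (\<lambda>s. 0) t = 0" if "t \<in> I" for t
  proof -
    have h: "\<forall>c. \<forall>t\<in>I. L (\<lambda>s. c * 0) t = c * L (\<lambda>s. 0) t" using bspec[OF A(3) zCI] by simp
    show ?thesis using h[rule_format, of t 0, OF that] by simp
  qed
  have K0: "0 \<le> K"
  proof -
    have sn0: "supnorm I (\<lambda>s. 0::real) \<le> 1" by (rule sn_least[OF Ine]) simp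
    have "supnorm I (\<lambda>t. 0 - L (\<lambda>s. 0) t) \<in> Q" using QI[OF zCI sn0] by simp
    then have "supnorm I (\<lambda>t. 0 - L (\<lambda>s. 0) t) \<le> K" unfolding KQ by (rule cSup_upper[OF _ Qbdd])
    moreover have "0 \<le> supnorm I (\<lambda>t. 0 - L (\<lambda>s. 0) t)"
      using A(1) zCI by (intro sn_nonneg[OF Icp _ Ine]) (auto simp: CI_def intro!: continuous_intros)
    ultimately show ?thesis by simp
  qed
  have rK: "supnorm I (\<lambda>t. r t - L r t) \<le> K * supnorm I r" if r: "r \<in> CI I" for r
  proof -
    have rc: "continuous_on I r" using r by (simp add: CI_def)
    define s where "s = supnorm I r"
    have s0: "0 \<le> s" unfolding s_def by (rule sn_nonneg[OF Icp rc Ine])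
    show ?thesis
    proof (cases "s = 0")
      case True
      have r0: "\<forall>t\<in>I. r t = 0"
      proof
        fix t assume "t \<in> I"
        then have "\<bar>r t\<bar> \<le> s" using sn_upper[OF Icp rc] by (simp add: s_def)
        then show "r t = 0" using True by simp
      qed
      have "(\<forall>t\<in>I. r t = (\<lambda>s. 0::real) t) \<longrightarrow> (\<forall>t\<in>I. L r t = L (\<lambda>s. 0) t)"
        by (rule bspec[OF bspec[OF A(2) r] zCI])
      then have "\<forall>t\<in>I. L r t = L (\<lambda>s. 0) t" using r0 by simp
      then have "\<forall>t\<in>I. r t - L r t = 0" using L0 \<open>\<forall>t\<in>I. r t = 0\<close> by simp
      then have "supnorm I (\<lambda>t. r t - L r t) \<le> 0" by (intro sn_least[OF Ine]) auto
      then show ?thesis using True by (simp add: s_def)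
    next
      case False
      then have sp: "s > 0" using s0 by simp
      define g where "g = (\<lambda>t. (1 / s) * r t)"
      have gCI: "g \<in> CI I" using rc sp by (auto simp: g_def CI_def intro!: continuous_intros)
      have "supnorm I g \<le> 1"
      proof (rule sn_least[OF Ine])
        fix t assume "t \<in> I"
        then have "\<bar>r t\<bar> \<le> s" using sn_upper[OF Icp rc] by (simp add: s_def)
        then show "\<bar>g t\<bar> \<le> 1" using sp by (simp add: g_def abs_mult)
      qed
      then have "supnorm I (\<lambda>t. g t - L g t) \<in> Q" using QI[OF gCI] by blast
      then have gK: "supnorm I (\<lambda>t. g t - L g t) \<le> K" unfolding KQ by (rule cSup_upper[OF _ Qbdd])
      have gLc: "continuous_on I (\<lambda>t. g t - L g t)"
        using gCI A(1) by (auto simp: CI_def intro!: continuous_intros)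
      have "\<bar>r t - L r t\<bar> \<le> s * K" if t: "t \<in> I" for t
      proof -
        have "L g t = (1 / s) * L r t"
          using bspec[OF spec[OF bspec[OF A(3) r], of "1 / s"] t] by (simp add: g_def)
        then have "r t - L r t = s * (g t - L g t)" using sp by (simp add: g_def field_simps)
        then have "\<bar>r t - L r t\<bar> = s * \<bar>g t - L g t\<bar>" using sp by (simp add: abs_mult)
        also have "\<dots> \<le> s * K" using sn_upper[OF Icp gLc t] gK s0
          by (intro mult_left_mono) auto
        finally show ?thesis .
      qed
      then have "supnorm I (\<lambda>t. r t - L r t) \<le> s * K" by (intro sn_least[OF Ine]) auto
      then show ?thesis by (simp add: s_def mult.commute)
    qed
  qed
  define R where "R = Rat_fun I m n"
  define F where "F = fractal_op xs N \<alpha> L"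
  define nf where "nf = supnorm I f"
  define k where "k = c * K"
  have k0: "0 \<le> k" using c0 K0 by (simp add: k_def)
  have per: "supnorm I (\<lambda>t. f t - F r t) \<le> (1 + k) * supnorm I (\<lambda>t. f t - r t) + k * nf
      \<and> continuous_on I (\<lambda>t. f t - F r t)" if r: "r \<in> R" for r
  proof -
    have rc: "continuous_on I r" using rat_cont r by (simp add: R_def)
    have rCI: "r \<in> CI I" using rc by (simp add: CI_def)
    have Lrc: "continuous_on I (L r)" using A(1) rCI by (simp add: CI_def)
    have ends: "L r (xs 0) = r (xs 0)" "L r (xs N) = r (xs N)" using A(5) rCI by auto
    have FP: "FP xs N \<alpha> r (L r) (F r)"
      unfolding F_def fractal_op_def
      by (rule fractal_FP[OF p al]) (use rc Lrc ends in \<open>simp_all add: I_def\<close>)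
    have est: "\<bar>F r y - r y\<bar> \<le> c * supnorm I (\<lambda>t. r t - L r t)" if y: "y \<in> I" for y
    proof -
      have rcI: "continuous_on (Ival xs N) r" and LrcI: "continuous_on (Ival xs N) (L r)"
        using rc Lrc by (simp_all add: I_def)
      show ?thesis using FP_estimate[OF p al rcI LrcI ends(1) ends(2) FP] y
        by (simp add: I_def c_def a_def)
    qed
    have Fc: "continuous_on I (F r)"
    proof -
      have rcI: "continuous_on (Ival xs N) r" and LrcI: "continuous_on (Ival xs N) (L r)"
        using rc Lrc by (simp_all add: I_def)
      show ?thesis using FP unfolding FP_def[OF p al rcI LrcI ends(1) ends(2)] by (simp add: I_def)
    qed
    define d where "d = supnorm I (\<lambda>t. f t - r t)"
    have frc: "continuous_on I (\<lambda>t. f t - r t)" using fc rc by (intro continuous_intros)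
    have rn: "supnorm I r \<le> nf + d"
    proof (rule sn_least[OF Ine])
      fix t assume t: "t \<in> I"
      have "\<bar>r t\<bar> \<le> \<bar>f t\<bar> + \<bar>f t - r t\<bar>" by simp
      then show "\<bar>r t\<bar> \<le> nf + d" using sn_upper[OF Icp fc t] sn_upper[OF Icp frc t]
        by (simp add: nf_def d_def)
    qed
    have "supnorm I (\<lambda>t. f t - F r t) \<le> d + k * (nf + d)"
    proof (rule sn_least[OF Ine])
      fix t assume t: "t \<in> I"
      have "\<bar>f t - F r t\<bar> \<le> \<bar>f t - r t\<bar> + \<bar>F r t - r t\<bar>" by simp
      also have "\<dots> \<le> d + c * supnorm I (\<lambda>t. r t - L r t)"
        using sn_upper[OF Icp frc t] est[OF t] by (simp add: d_def)
      also have "\<dots> \<le> d + c * (K * supnorm I r)" using rK[OF rCI] c0 by (simp add: mult_left_mono)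
      also have "\<dots> \<le> d + k * (nf + d)"
      proof -
        have "k * supnorm I r \<le> k * (nf + d)" using rn k0 by (intro mult_left_mono)
        then show ?thesis by (simp add: k_def mult.assoc)
      qed
      finally show "\<bar>f t - F r t\<bar> \<le> d + k * (nf + d)" .
    qed
    then show ?thesis using fc Fc by (auto simp: d_def algebra_simps intro!: continuous_intros)
  qed
  define S1 where "S1 = {supnorm I (\<lambda>t. f t - s t) | s. s \<in> F ` R}"
  define S0 where "S0 = {supnorm I (\<lambda>t. f t - s t) | s. s \<in> R}"
  have S1b: "bdd_below S1"
  proof (rule bdd_belowI[of _ 0])
    fix x assume "x \<in> S1"
    then obtain r where x: "x = supnorm I (\<lambda>t. f t - F r t)" and r: "r \<in> R" by (auto simp: S1_def)
    show "0 \<le> x" unfolding x using per[OF r] by (intro sn_nonneg[OF Icp _ Ine]) auto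
  qed
  define D1 where "D1 = Inf S1"
  define D0 where "D0 = Inf S0"
  have "(D1 - k * nf) / (1 + k) \<le> x" if x: "x \<in> S0" for x
  proof -
    obtain r where x: "x = supnorm I (\<lambda>t. f t - r t)" and r: "r \<in> R" using x by (auto simp: S0_def)
    have "supnorm I (\<lambda>t. f t - F r t) \<in> S1" using r by (auto simp: S1_def)
    then have "D1 \<le> supnorm I (\<lambda>t. f t - F r t)" unfolding D1_def by (rule cInf_lower[OF _ S1b])
    then have "D1 \<le> (1 + k) * x + k * nf" using per[OF r] x by simp
    then show ?thesis using k0 by (simp add: divide_le_eq algebra_simps)
  qed
  moreover have "S0 \<noteq> {}" using rat_ne[of I m n] by (auto simp: S0_def R_def)
  ultimately have "(D1 - k * nf) / (1 + k) \<le> D0" unfolding D0_def by (intro cInf_greatest) auto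
  then have "D1 \<le> D0 + k * (D0 + nf)" using k0 by (simp add: divide_le_eq algebra_simps)
  then show ?thesis
    by (simp add: D1_def D0_def S1_def S0_def dist_set_def I_def R_def F_def k_def c_def a_def nf_def K_def)
qed

end
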